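(* Let $c_{\min}\le c_{\max}$ and $d_{\min}\le d_{\max}$ be integers, $T=\{c_{\min},\dots,c_{\max}\}\times\{d_{\min},\dots,d_{\max}\}$, let $f:T\to[0,1]$ be a probability mass function, and let $a:T\to[0,1]$ be monotonic, i.e. $a_{c,d}\ge a_{c',d'}$ whenever $c\le c'$ and $d\ge d'$. Consider the problem of choosing $p:T\to\mathbb{R}$ to $$\text{minimize}\ \sum_{(c,d)\in T} f_{c,d}\,p_{c,d}$$ subject to, for every $(c,d)\in T$: $p_{c,d}-c\,a_{c,d}\ge p_{c+1,d}-c\,a_{c+1,d}$ (if $c<c_{\max}$); $p_{c,d}-c\,a_{c,d}\ge p_{c-1,d}-c\,a_{c-1,d}$ (if $c>c_{\min}$); $p_{c,d}-c\,a_{c,d}\ge p_{c,d-1}-c\,a_{c,d-1}$ (if $d>d_{\min}$); $p_{c,d}-c\,a_{c,d}\ge 0$. Then the payment rule $$p_{c,d}=c\,a_{c,d}+\sum_{k=c+1}^{c_{\max}} a_{k,d}\qquad((c,d)\in T)$$ is an optimal solution of this problem.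
   Context: Types $(c,d)$ consist of a forwarding cost $c$ and a predicted path duration $d$; $f_{c,d}$ is the probability that a bidder has type $(c,d)$, $a_{c,d}$ is the interim probability that a bidder reporting $(c,d)$ wins, and $p_{c,d}$ is its expected payment. The first three families of constraints are the adjacent incentive-compatibility constraints and the last is individual rationality; the objective is the auctioneer's expected payment. *)

theory Defs
  imports Complex_Main
begin

text \<open>Type space T = {cmin..cmax} x {dmin..dmax}; functions on T are
represented as functions int => int => real, only values on T matter.\<close>

definition types :: "int \<Rightarrow> int \<Rightarrow> int \<Rightarrow> int \<Rightarrow> (int \<times> int) set" where
  "types cmin cmax dmin dmax = {cmin..cmax} \<times> {dmin..dmax}"

definition objective :: "int \<Rightarrow> int \<Rightarrow> int \<Rightarrow> int \<Rightarrow> (int \<Rightarrow> int \<Rightarrow> real) \<Rightarrow> (int \<Rightarrow> int \<Rightarrow> real) \<Rightarrow> real" where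
  "objective cmin cmax dmin dmax f p =
     (\<Sum>(c,d)\<in>types cmin cmax dmin dmax. f c d * p c d)"

definition feasible :: "int \<Rightarrow> int \<Rightarrow> int \<Rightarrow> int \<Rightarrow> (int \<Rightarrow> int \<Rightarrow> real) \<Rightarrow> (int \<Rightarrow> int \<Rightarrow> real) \<Rightarrow> bool" where
  "feasible cmin cmax dmin dmax a p \<longleftrightarrow>
     (\<forall>(c,d)\<in>types cmin cmax dmin dmax.
        (c < cmax \<longrightarrow> p c d - of_int c * a c d \<ge> p (c+1) d - of_int c * a (c+1) d) \<and>
        (c > cmin \<longrightarrow> p c d - of_int c * a c d \<ge> p (c-1) d - of_int c * a (c-1) d) \<and>
        (d > dmin \<longrightarrow> p c d - of_int c * a c d \<ge> p c (d-1) - of_int c * a c (d-1)) \<and>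
        p c d - of_int c * a c d \<ge> 0)"

definition optimal :: "int \<Rightarrow> int \<Rightarrow> int \<Rightarrow> int \<Rightarrow> (int \<Rightarrow> int \<Rightarrow> real) \<Rightarrow> (int \<Rightarrow> int \<Rightarrow> real) \<Rightarrow> (int \<Rightarrow> int \<Rightarrow> real) \<Rightarrow> bool" where
  "optimal cmin cmax dmin dmax f a p \<longleftrightarrow>
     feasible cmin cmax dmin dmax a p \<and>
     (\<forall>q. feasible cmin cmax dmin dmax a q \<longrightarrow>
          objective cmin cmax dmin dmax f p \<le> objective cmin cmax dmin dmax f q)"

end

theory Submission
  imports Defs
begin

lemma sum_split_int:
  fixes g :: "int \<Rightarrow> real"
  assumes "c \<le> cmax"
  shows "(\<Sum>k\<in>{c..cmax}. g k) = g c + (\<Sum>k\<in>{c+1..cmax}. g k)"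
proof -
  have "{c..cmax} = insert c {c+1..cmax}" using assms by auto
  thus ?thesis by simp
qed

theorem theorem2:
  fixes cmin cmax dmin dmax :: int and f a :: "int \<Rightarrow> int \<Rightarrow> real"
  assumes "cmin \<le> cmax" and "dmin \<le> dmax"
    and "\<forall>(c,d)\<in>types cmin cmax dmin dmax. 0 \<le> f c d \<and> f c d \<le> 1"
    and "(\<Sum>(c,d)\<in>types cmin cmax dmin dmax. f c d) = 1"
    and "\<forall>(c,d)\<in>types cmin cmax dmin dmax. 0 \<le> a c d \<and> a c d \<le> 1"
    and "\<forall>(c,d)\<in>types cmin cmax dmin dmax. \<forall>(c',d')\<in>types cmin cmax dmin dmax.
           c \<le> c' \<and> d' \<le> d \<longrightarrow> a c' d' \<le> a c d"
  shows "optimal cmin cmax dmin dmax f a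
           (\<lambda>c d. of_int c * a c d + (\<Sum>k\<in>{c+1..cmax}. a k d))"
proof -
  define S where "S c d = (\<Sum>k\<in>{c+1..cmax}. a k d)" for c d
  define P where "P c d = of_int c * a c d + S c d" for c d
  have Ssplit: "S c d = a (c+1) d + S (c+1) d" if "c < cmax" for c d
    unfolding S_def using sum_split_int[of "c+1" cmax "\<lambda>k. a k d"] that by simp
  have mono: "a c' d' \<le> a c d" if "cmin \<le> c" "c \<le> c'" "c' \<le> cmax" "dmin \<le> d'" "d' \<le> d" "d \<le> dmax" for c d c' d'
    using assms(6) that unfolding types_def by fastforce
  have a0: "0 \<le> a c d" if "cmin \<le> c" "c \<le> cmax" "dmin \<le> d" "d \<le> dmax" for c d
    using assms(5) that unfolding types_def by fastforce
  have S0: "0 \<le> S c d" if "cmin \<le> c" "dmin \<le> d" "d \<le> dmax" for c d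
    unfolding S_def using that by (intro sum_nonneg) (auto intro: a0)
  have Smono: "S c (d-1) \<le> S c d" if "cmin \<le> c" "dmin < d" "d \<le> dmax" for c d
    unfolding S_def using that by (intro sum_mono) (auto intro: mono)
  have feas: "feasible cmin cmax dmin dmax a P"
    unfolding feasible_def
  proof (clarify, intro conjI impI)
    fix c d assume cd: "(c, d) \<in> types cmin cmax dmin dmax"
    hence r: "cmin \<le> c" "c \<le> cmax" "dmin \<le> d" "d \<le> dmax" unfolding types_def by auto
    show "c < cmax \<Longrightarrow> P (c+1) d - of_int c * a (c+1) d \<le> P c d - of_int c * a c d"
      unfolding P_def using Ssplit[of c d] by (simp add: algebra_simps)
    show "cmin < c \<Longrightarrow> P (c-1) d - of_int c * a (c-1) d \<le> P c d - of_int c * a c d"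
    proof -
      assume "cmin < c"
      have "S (c-1) d = a c d + S c d" using Ssplit[of "c-1" d] r by simp
      moreover have "a c d \<le> a (c-1) d" using mono[of "c-1" c d d] r \<open>cmin < c\<close> by simp
      ultimately show ?thesis unfolding P_def by (simp add: algebra_simps)
    qed
    show "dmin < d \<Longrightarrow> P c (d-1) - of_int c * a c (d-1) \<le> P c d - of_int c * a c d"
      unfolding P_def using Smono[of c d] r by simp
    show "0 \<le> P c d - of_int c * a c d" unfolding P_def using S0 r by simp
  qed
  have lower: "P c d \<le> q c d" if fq: "feasible cmin cmax dmin dmax a q"
     and r: "cmin \<le> c" "c \<le> cmax" "dmin \<le> d" "d \<le> dmax" for q c d
  proof -
    have U1: "q (c'+1) d - of_int c' * a (c'+1) d \<le> q c' d - of_int c' * a c' d"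
      if "cmin \<le> c'" "c' < cmax" for c'
      using fq that r unfolding feasible_def types_def by fastforce
    have U4: "0 \<le> q c' d - of_int c' * a c' d" if "cmin \<le> c'" "c' \<le> cmax" for c'
      using fq that r unfolding feasible_def types_def by fastforce
    have "\<forall>c. c = cmax - int n \<longrightarrow> cmin \<le> c \<longrightarrow> S c d \<le> q c d - of_int c * a c d" for n
    proof (induction n)
      case 0
      then show ?case using U4 assms(1) by (auto simp: S_def)
    next
      case (Suc n)
      show ?case
      proof (intro allI impI)
        fix c assume c: "c = cmax - int (Suc n)" "cmin \<le> c"
        have IH: "S (c+1) d \<le> q (c+1) d - of_int (c+1) * a (c+1) d"
          using Suc.IH c by auto
        have "S c d = a (c+1) d + S (c+1) d" using Ssplit c by simp
        also have "\<dots> \<le> q (c+1) d - of_int c * a (c+1) d" using IH by (simp add: algebra_simps)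
        also have "\<dots> \<le> q c d - of_int c * a c d" using U1[of c] c by linarith
        finally show "S c d \<le> q c d - of_int c * a c d" .
      qed
    qed
    from this[of "nat (cmax - c)"] r have "S c d \<le> q c d - of_int c * a c d" by simp
    thus ?thesis unfolding P_def by simp
  qed
  have "objective cmin cmax dmin dmax f P \<le> objective cmin cmax dmin dmax f q"
    if "feasible cmin cmax dmin dmax a q" for q
    unfolding objective_def
  proof (rule sum_mono, clarify)
    fix c d assume cd: "(c, d) \<in> types cmin cmax dmin dmax"
    hence r: "cmin \<le> c" "c \<le> cmax" "dmin \<le> d" "d \<le> dmax" unfolding types_def by auto
    have "0 \<le> f c d" using assms(3) cd by auto
    thus "f c d * P c d \<le> f c d * q c d" using lower[OF that r] by (rule mult_left_mono[rotated])
  qed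
  with feas have "optimal cmin cmax dmin dmax f a P" unfolding optimal_def by blast
  thus ?thesis unfolding P_def S_def .
qed

end
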